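(* There is an absolute constant $C$ such that the following holds. Let $\mathcal L(G(V,E),M,N,\{\pi^{v,e}\})$ be a $k$-Label Cover instance such that $|(\pi^{v,e})^{-1}(i)|\le d=4^k$ for all projections and all $i\in[N]$, and which is smooth with parameter $J=4^{17k}$. Let $\tau=k^{-13}$ and let $\vec w_v\in\mathbb R^M$ ($v\in V$) be arbitrary (the weight vectors of a halfspace $h(\vec y)=\mathrm{sgn}(\sum_{v\in V}\langle\vec w_v,\vec y_v\rangle-\theta)$ on $\{0,1\}^{V\times M}$). Then the fraction (with multiplicity) of hyperedges of $E$ that are $2\tau$-nice is at least $1-C/k$.
   Context: A $k$-Label Cover instance is a $k$-uniform hypergraph on $V$ with a multiset $E$ of hyperedges $e=(v_1,\dots,v_k)$ of distinct vertices, each with projections $\pi^{v_i,e}:[M]\to[N]$. It is smooth with parameter $J$ if for every vertex $v$ and all $i\ne j\in[M]$, for a uniformly random hyperedge $e$ containing $v$, $\Pr[\pi^{v,e}(i)=\pi^{v,e}(j)]\le1/J$. Critical index: for $\vec u\in\mathbb R^n$ order indices $i_1,\dots,i_n$ by decreasing $|u^{(i)}|$ (ties by increasing index), $\sigma_m^2=\sum_{j\ge m}|u^{(i_j)}|^2$; $c_\tau(\vec u)$ is the smallest $m$ with $|u^{(i_m)}|\le\tau\sigma_m$ ($+\infty$ if none); $C_\tau(\vec u)=\{i_1,\dots,i_{c_\tau(\vec u)-1}\}$ if finite, else $[n]$. $\mathrm{truncate}(\vec u,S)$ agrees with $\vec u$ on $S$ and is $0$ elsewhere. Set $\vec s_v=\mathrm{truncate}(\vec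 w_v,C_\tau(\vec w_v))$ and $\vec l_v=\vec w_v-\vec s_v$. A vertex $v$ is $\beta$-nice with respect to a hyperedge $e\ni v$ if $\sum_{i\in[N]}\big(\sum_{j\in\pi^{-1}(i)}|l_v^{(j)}|\big)^4\le\beta\|\vec l_v\|_2^4$ where $\pi=\pi^{v,e}$; a hyperedge is $\beta$-nice if each of its vertices is $\beta$-nice with respect to it. *)

theory Defs
  imports Main "HOL-Library.Product_Lexorder" Complex_Main
begin

text \<open>Labels are [M] = {0..<M}, [N] = {0..<N}; vertices are natural numbers.
A hyperedge is a pair (vs, pi) where vs is the list of its k vertices and
pi v : nat => nat is the projection for vertex v on that hyperedge.
The multiset E of hyperedges is a list (multiplicity = repetition).\<close>

type_synonym hedge = "nat list \<times> (nat \<Rightarrow> nat \<Rightarrow> nat)"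

definition label_cover :: "nat \<Rightarrow> nat set \<Rightarrow> nat \<Rightarrow> nat \<Rightarrow> hedge list \<Rightarrow> bool" where
  "label_cover k V M N E \<longleftrightarrow> finite V \<and>
     (\<forall>e\<in>set E. length (fst e) = k \<and> distinct (fst e) \<and> set (fst e) \<subseteq> V \<and>
        (\<forall>v\<in>set (fst e). \<forall>j<M. snd e v j < N))"

definition preimage_bounded :: "nat \<Rightarrow> nat \<Rightarrow> hedge list \<Rightarrow> nat \<Rightarrow> bool" where
  "preimage_bounded M N E d \<longleftrightarrow>
     (\<forall>e\<in>set E. \<forall>v\<in>set (fst e). \<forall>i<N. card {j. j < M \<and> snd e v j = i} \<le> d)"

text \<open>Smoothness with parameter J: for a uniformly random hyperedge (with multiplicity)
containing v, Pr[pi(i) = pi(j)] <= 1/J.\<close>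
definition smooth :: "nat set \<Rightarrow> nat \<Rightarrow> hedge list \<Rightarrow> real \<Rightarrow> bool" where
  "smooth V M E J \<longleftrightarrow>
     (\<forall>v\<in>V. \<forall>i<M. \<forall>j<M. i \<noteq> j \<longrightarrow>
        real (card {x. x < length E \<and> v \<in> set (fst (E ! x)) \<and>
                         snd (E ! x) v i = snd (E ! x) v j})
        \<le> real (card {x. x < length E \<and> v \<in> set (fst (E ! x))}) / J)"

definition sorted_idx :: "(nat \<Rightarrow> real) \<Rightarrow> nat \<Rightarrow> nat list" where
  "sorted_idx u n = sort_key (\<lambda>i. (- \<bar>u i\<bar>, i)) [0..<n]"

text \<open>i_m (1-indexed) and sigma_m.\<close>
definition idx_at :: "(nat \<Rightarrow> real) \<Rightarrow> nat \<Rightarrow> nat \<Rightarrow> nat" where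
  "idx_at u n m = sorted_idx u n ! (m - 1)"

definition tail_sigma :: "(nat \<Rightarrow> real) \<Rightarrow> nat \<Rightarrow> nat \<Rightarrow> real" where
  "tail_sigma u n m = sqrt (\<Sum>j = m..n. \<bar>u (idx_at u n j)\<bar> ^ 2)"

definition crit_cond :: "real \<Rightarrow> (nat \<Rightarrow> real) \<Rightarrow> nat \<Rightarrow> nat \<Rightarrow> bool" where
  "crit_cond \<tau> u n m \<longleftrightarrow> m \<in> {1..n} \<and> \<bar>u (idx_at u n m)\<bar> \<le> \<tau> * tail_sigma u n m"

text \<open>Critical index c_tau (None = +infinity).\<close>
definition crit_index :: "real \<Rightarrow> (nat \<Rightarrow> real) \<Rightarrow> nat \<Rightarrow> nat option" where
  "crit_index \<tau> u n = (if \<exists>m. crit_cond \<tau> u n m then Some (LEAST m. crit_cond \<tau> u n m) else None)"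

definition crit_set :: "real \<Rightarrow> (nat \<Rightarrow> real) \<Rightarrow> nat \<Rightarrow> nat set" where
  "crit_set \<tau> u n = (case crit_index \<tau> u n of
       Some c \<Rightarrow> {idx_at u n j | j. j \<in> {1..<c}}
     | None \<Rightarrow> {0..<n})"

definition truncate :: "(nat \<Rightarrow> real) \<Rightarrow> nat set \<Rightarrow> nat \<Rightarrow> real" where
  "truncate u S = (\<lambda>i. if i \<in> S then u i else 0)"

definition small_part :: "real \<Rightarrow> nat \<Rightarrow> (nat \<Rightarrow> real) \<Rightarrow> nat \<Rightarrow> real" where
  "small_part \<tau> M w = truncate w (crit_set \<tau> w M)"

definition large_part :: "real \<Rightarrow> nat \<Rightarrow> (nat \<Rightarrow> real) \<Rightarrow> nat \<Rightarrow> real" where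
  "large_part \<tau> M w = (\<lambda>i. w i - small_part \<tau> M w i)"

text \<open>v is beta-nice w.r.t. e (pi = projection of v on e, l = l_v).\<close>
definition nice_wrt :: "real \<Rightarrow> nat \<Rightarrow> nat \<Rightarrow> (nat \<Rightarrow> nat) \<Rightarrow> (nat \<Rightarrow> real) \<Rightarrow> bool" where
  "nice_wrt \<beta> M N \<pi> l \<longleftrightarrow>
     (\<Sum>i<N. (\<Sum>j\<in>{j. j < M \<and> \<pi> j = i}. \<bar>l j\<bar>) ^ 4)
       \<le> \<beta> * (sqrt (\<Sum>j<M. (l j)\<^sup>2)) ^ 4"

definition vertex_nice :: "real \<Rightarrow> real \<Rightarrow> nat \<Rightarrow> nat \<Rightarrow> (nat \<Rightarrow> nat \<Rightarrow> real) \<Rightarrow> hedge \<Rightarrow> nat \<Rightarrow> bool" where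
  "vertex_nice \<beta> \<tau> M N w e v \<longleftrightarrow> nice_wrt \<beta> M N (snd e v) (large_part \<tau> M (w v))"

definition edge_nice :: "real \<Rightarrow> real \<Rightarrow> nat \<Rightarrow> nat \<Rightarrow> (nat \<Rightarrow> nat \<Rightarrow> real) \<Rightarrow> hedge \<Rightarrow> bool" where
  "edge_nice \<beta> \<tau> M N w e \<longleftrightarrow> (\<forall>v\<in>set (fst e). vertex_nice \<beta> \<tau> M N w e v)"

end

theory Submission
  imports Defs "HOL-Analysis.Convex"
begin

lemma pow4_split:
  fixes x y :: real
  assumes "x \<ge> 0" "y \<ge> 0"
  shows "(x+y)^4 \<le> 8*x^4 + 8*y^4"
proof -
  have h1: "0 \<le> (x-y)^2" by simp
  have "(x+y)^2 \<le> 2*(x^2+y^2)" using h1 by (simp add: power2_eq_square algebra_simps)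
  then have "((x+y)^2)^2 \<le> (2*(x^2+y^2))^2" by (intro power_mono) auto
  moreover have "(2*(x^2+y^2))^2 \<le> 8*x^4 + 8*y^4"
  proof -
    have "0 \<le> (x^2-y^2)^2" by simp
    then show ?thesis by (simp add: power2_eq_square power4_eq_xxxx algebra_simps)
  qed
  ultimately show ?thesis by (simp add: power_mult[symmetric])
qed

lemma block_bound:
  fixes a :: "nat \<Rightarrow> real" and d :: nat
  assumes fin: "finite B" and cB: "card B \<le> d" and nn: "\<forall>j\<in>B. a j \<ge> 0"
    and cH: "card (B \<inter> H) \<le> 1" and hb: "\<forall>j\<in>B\<inter>H. (a j)^2 \<le> t2"
    and lb: "\<forall>j\<in>B-H. (a j)^2 \<le> e" and e0: "e \<ge> 0" and t0: "t2 \<ge> 0"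
  shows "(\<Sum>j\<in>B. a j)^4 \<le> (8*t2 + 8*real d^3*e) * (\<Sum>j\<in>B. (a j)^2)"
proof -
  define x where "x = (\<Sum>j\<in>B\<inter>H. a j)"
  define y where "y = (\<Sum>j\<in>B-H. a j)"
  define S where "S = (\<Sum>j\<in>B. (a j)^2)"
  have sxy: "(\<Sum>j\<in>B. a j) = x + y" unfolding x_def y_def using sum.Int_Diff[OF fin] by blast
  have x0: "x \<ge> 0" unfolding x_def using nn by (intro sum_nonneg) auto
  have y0: "y \<ge> 0" unfolding y_def using nn by (intro sum_nonneg) auto
  have SH: "(\<Sum>j\<in>B\<inter>H. (a j)^2) \<le> S" unfolding S_def by (rule sum_mono2) (use fin in auto)
  have SL: "(\<Sum>j\<in>B-H. (a j)^2) \<le> S" unfolding S_def by (rule sum_mono2) (use fin in auto)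
  have x4: "x^4 \<le> t2 * S"
  proof -
    have "finite (B\<inter>H)" using fin by auto
    then have "B \<inter> H = {} \<or> (\<exists>j. B \<inter> H = {j})" using cH
      by (metis One_nat_def card_0_eq card_1_singletonE le_Suc_eq le_zero_eq)
    then show ?thesis
    proof
      assume "B \<inter> H = {}" then show ?thesis unfolding x_def using t0 SH by (simp add: mult_nonneg_nonneg)
    next
      assume "\<exists>j. B \<inter> H = {j}"
      then obtain j where j: "B \<inter> H = {j}" by blast
      have "(a j)^2 \<le> t2" using hb j by auto
      have "x^4 = (a j)^2 * (a j)^2" unfolding x_def j by (simp add: power4_eq_xxxx power2_eq_square)
      also have "\<dots> \<le> t2 * (a j)^2" using \<open>(a j)^2 \<le> t2\<close> by (intro mult_right_mono) auto
      also have "\<dots> \<le> t2 * S" using SH j t0 by (intro mult_left_mono) auto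
      finally show ?thesis .
    qed
  qed
  have y2a: "y^2 \<le> real d * S"
  proof -
    have "y^2 \<le> (\<Sum>j\<in>B-H. (a j)^2) * card (B-H)" unfolding y_def by (rule sum_squared_le_sum_of_squares)
    also have "\<dots> \<le> S * real d"
    proof (rule mult_mono)
      show "real (card (B-H)) \<le> real d" using cB card_mono[OF fin, of "B-H"] by auto
    qed (use SL in \<open>auto simp: S_def intro: sum_nonneg\<close>)
    finally show ?thesis by (simp add: mult.commute)
  qed
  have y1: "y \<le> real d * sqrt e"
  proof -
    have "y \<le> (\<Sum>j\<in>B-H. sqrt e)" unfolding y_def
    proof (rule sum_mono)
      fix j assume j: "j \<in> B-H"
      have "sqrt ((a j)^2) \<le> sqrt e" using lb j by (intro real_sqrt_le_mono) auto
      then show "a j \<le> sqrt e" using nn j by simp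
    qed
    also have "\<dots> = card (B-H) * sqrt e" by simp
    also have "\<dots> \<le> real d * sqrt e" using cB card_mono[OF fin, of "B-H"] e0 by (intro mult_right_mono) auto
    finally show ?thesis .
  qed
  have y2b: "y^2 \<le> real d^2 * e"
  proof -
    have "y^2 \<le> (real d * sqrt e)^2" using y1 y0 by (intro power_mono) auto
    then show ?thesis using e0 by (simp add: power_mult_distrib)
  qed
  have y4: "y^4 \<le> real d^3 * e * S"
  proof -
    have "y^4 = y^2 * y^2" by (simp add: power4_eq_xxxx power2_eq_square)
    also have "\<dots> \<le> (real d^2 * e) * (real d * S)"
      using y2a y2b e0 by (intro mult_mono) auto
    also have "\<dots> = real d^3 * e * S" by (simp add: power2_eq_square power3_eq_cube)
    finally show ?thesis .
  qed
  have "(\<Sum>j\<in>B. a j)^4 \<le> 8*x^4 + 8*y^4" using sxy pow4_split[OF x0 y0] by simp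
  also have "\<dots> \<le> 8*(t2*S) + 8*(real d^3 * e * S)" using x4 y4 by linarith
  finally show ?thesis by (simp add: S_def algebra_simps)
qed

lemma nice_det:
  fixes a :: "nat \<Rightarrow> real" and \<pi> :: "nat \<Rightarrow> nat" and d :: nat
  assumes nn: "\<forall>j. a j \<ge> 0"
    and n2: "n2 = (\<Sum>j<M. (a j)^2)"
    and amax: "\<forall>j<M. (a j)^2 \<le> t2"
    and t0: "t2 \<ge> 0"
    and rng: "\<forall>j<M. \<pi> j < N"
    and blk: "\<forall>i<N. card {j. j<M \<and> \<pi> j = i} \<le> d"
    and e0: "e \<ge> 0"
    and nocoll: "\<forall>i<M. \<forall>j<M. (a i)^2 > e \<and> (a j)^2 > e \<and> i \<noteq> j \<longrightarrow> \<pi> i \<noteq> \<pi> j"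
  shows "(\<Sum>i<N. (\<Sum>j\<in>{j. j<M \<and> \<pi> j = i}. a j)^4) \<le> (8*t2 + 8*real d^3*e) * n2"
proof -
  define H where "H = {j. (a j)^2 > e}"
  have "(\<Sum>i<N. (\<Sum>j\<in>{j. j<M \<and> \<pi> j = i}. a j)^4)
      \<le> (\<Sum>i<N. (8*t2 + 8*real d^3*e) * (\<Sum>j\<in>{j. j<M \<and> \<pi> j = i}. (a j)^2))"
  proof (rule sum_mono)
    fix i assume i: "i \<in> {..<N}"
    define B where "B = {j. j<M \<and> \<pi> j = i}"
    have fin: "finite B" unfolding B_def by auto
    have cH: "card (B \<inter> H) \<le> 1"
    proof -
      have "finite (B \<inter> H)" using fin by auto
      moreover have "\<forall>x\<in>B\<inter>H. \<forall>y\<in>B\<inter>H. x = y"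
        using nocoll unfolding B_def H_def by auto
      ultimately show ?thesis using card_le_Suc0_iff_eq by (metis One_nat_def)
    qed
    show "(\<Sum>j\<in>{j. j<M \<and> \<pi> j = i}. a j)^4 \<le> (8*t2 + 8*real d^3*e) * (\<Sum>j\<in>{j. j<M \<and> \<pi> j = i}. (a j)^2)"
      unfolding B_def[symmetric]
      apply (rule block_bound[OF fin _ _ cH _ _ e0 t0])
      using blk i amax nn unfolding B_def H_def by auto
  qed
  also have "\<dots> = (8*t2 + 8*real d^3*e) * (\<Sum>i<N. (\<Sum>j\<in>{j. j<M \<and> \<pi> j = i}. (a j)^2))"
    by (simp add: sum_distrib_left)
  also have "(\<Sum>i<N. (\<Sum>j\<in>{j. j<M \<and> \<pi> j = i}. (a j)^2)) = (\<Sum>j<M. (a j)^2)"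
    using sum.group[of "{..<M}" "{..<N}" \<pi> "\<lambda>j. (a j)^2"] rng by auto
  finally show ?thesis using n2 by simp
qed

lemma nice_from_det:
  fixes l :: "nat \<Rightarrow> real" and \<pi> :: "nat \<Rightarrow> nat" and d :: nat
  assumes amax: "\<forall>j<M. \<bar>l j\<bar> \<le> \<tau> * sqrt (\<Sum>j<M. (l j)^2)"
    and t0: "\<tau> \<ge> 0"
    and rng: "\<forall>j<M. \<pi> j < N"
    and blk: "\<forall>i<N. card {j. j<M \<and> \<pi> j = i} \<le> d"
    and e0: "eps \<ge> 0"
    and nocoll: "\<forall>i<M. \<forall>j<M. (l i)^2 > eps * (\<Sum>j<M. (l j)^2) \<and> (l j)^2 > eps * (\<Sum>j<M. (l j)^2) \<and> i \<noteq> j \<longrightarrow> \<pi> i \<noteq> \<pi> j"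
    and beta: "8*\<tau>^2 + 8*real d^3*eps \<le> \<beta>"
  shows "nice_wrt \<beta> M N \<pi> l"
proof -
  define n2 where "n2 = (\<Sum>j<M. (l j)^2)"
  have n20: "n2 \<ge> 0" unfolding n2_def by (intro sum_nonneg) auto
  have am: "\<forall>j<M. (\<bar>l j\<bar>)^2 \<le> \<tau>^2 * n2"
  proof (intro allI impI)
    fix j assume "j < M"
    then have "\<bar>l j\<bar> \<le> \<tau> * sqrt n2" using amax n2_def by auto
    then have "\<bar>l j\<bar>^2 \<le> (\<tau> * sqrt n2)^2" by (intro power_mono) auto
    then show "(\<bar>l j\<bar>)^2 \<le> \<tau>^2 * n2" using n20 by (simp add: power_mult_distrib)
  qed
  have "(\<Sum>i<N. (\<Sum>j\<in>{j. j<M \<and> \<pi> j = i}. \<bar>l j\<bar>)^4) \<le> (8*(\<tau>^2*n2) + 8*real d^3*(eps*n2)) * n2"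
    apply (rule nice_det[where a="\<lambda>j. \<bar>l j\<bar>", OF _ _ am _ rng blk])
    using n20 e0 nocoll by (auto simp: n2_def)
  also have "\<dots> = (8*\<tau>^2 + 8*real d^3*eps) * n2^2" by (simp add: algebra_simps power2_eq_square)
  also have "\<dots> \<le> \<beta> * n2^2" using beta by (intro mult_right_mono) auto
  also have "\<dots> = \<beta> * (sqrt n2)^4" using n20
    by (metis power2_eq_square power4_eq_xxxx real_sqrt_pow2 mult.assoc)
  finally show ?thesis unfolding nice_wrt_def n2_def .
qed

lemma large_bound:
  assumes t0: "\<tau> \<ge> 0" and j: "j < M"
  shows "\<bar>large_part \<tau> M u j\<bar> \<le> \<tau> * sqrt (\<Sum>j<M. (large_part \<tau> M u j)^2)"
proof (cases "crit_index \<tau> u M")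
  case None
  then have "crit_set \<tau> u M = {0..<M}" by (simp add: crit_set_def)
  then show ?thesis using j t0
    by (simp add: large_part_def small_part_def truncate_def)
next
  case (Some c)
  define xs where "xs = sorted_idx u M"
  define l where "l = large_part \<tau> M u"
  define key where "key = (\<lambda>i. (- \<bar>u i\<bar>, i))"
  have xs_def': "xs = sort_key key [0..<M]" unfolding xs_def sorted_idx_def key_def by simp
  have len: "length xs = M" unfolding xs_def' by simp
  have dist: "distinct xs" unfolding xs_def' by simp
  have setx: "set xs = {0..<M}" unfolding xs_def' by simp
  have srt: "sorted (map key xs)" unfolding xs_def' by simp
  have idx: "\<And>m. idx_at u M m = xs ! (m - 1)" unfolding idx_at_def xs_def by simp
  have ex: "\<exists>m. crit_cond \<tau> u M m" and cdef: "c = (LEAST m. crit_cond \<tau> u M m)"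
    using Some by (auto simp: crit_index_def split: if_splits)
  have cc: "crit_cond \<tau> u M c" using LeastI_ex[OF ex] cdef by simp
  then have c1: "1 \<le> c" "c \<le> M" and cu: "\<bar>u (idx_at u M c)\<bar> \<le> \<tau> * tail_sigma u M c"
    by (auto simp: crit_cond_def)
  have cs: "crit_set \<tau> u M = {idx_at u M j | j. j \<in> {1..<c}}"
    using Some by (simp add: crit_set_def)
  have lval: "\<And>i. l i = (if i \<in> crit_set \<tau> u M then 0 else u i)"
    by (simp add: l_def large_part_def small_part_def truncate_def)
  have notin: "\<And>m. c \<le> m \<Longrightarrow> m \<le> M \<Longrightarrow> idx_at u M m \<notin> crit_set \<tau> u M"
  proof
    fix m assume m: "c \<le> m" "m \<le> M" and "idx_at u M m \<in> crit_set \<tau> u M"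
    then obtain m' where m': "m' \<in> {1..<c}" "idx_at u M m = idx_at u M m'" using cs by auto
    then have "xs ! (m - 1) = xs ! (m' - 1)" using idx by simp
    moreover have "m - 1 < length xs" "m' - 1 < length xs" using m m' c1 len by auto
    ultimately have "m - 1 = m' - 1" using dist nth_eq_iff_index_eq by blast
    then show False using m m' c1 by auto
  qed
  have sig: "tail_sigma u M c \<le> sqrt (\<Sum>j<M. (l j)^2)"
  proof -
    define g where "g = (\<lambda>m. idx_at u M m)"
    have inj: "inj_on g {c..M}"
    proof
      fix m m' assume "m \<in> {c..M}" "m' \<in> {c..M}" "g m = g m'"
      then have "xs ! (m - 1) = xs ! (m' - 1)" "m - 1 < length xs" "m' - 1 < length xs"
        using idx len c1 by (auto simp: g_def)
      then have "m - 1 = m' - 1" using dist nth_eq_iff_index_eq by blast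
      then show "m = m'" using \<open>m \<in> {c..M}\<close> \<open>m' \<in> {c..M}\<close> c1 by auto
    qed
    have sub: "g ` {c..M} \<subseteq> {..<M}"
    proof
      fix x assume "x \<in> g ` {c..M}"
      then obtain m where "m \<in> {c..M}" "x = xs ! (m - 1)" using idx g_def by auto
      then have "x \<in> set xs" using len c1 by auto
      then show "x \<in> {..<M}" using setx by auto
    qed
    have "(\<Sum>m = c..M. \<bar>u (idx_at u M m)\<bar>^2) = (\<Sum>m = c..M. (l (g m))^2)"
      using notin lval by (intro sum.cong) (auto simp: g_def)
    also have "\<dots> = (\<Sum>x\<in>g ` {c..M}. (l x)^2)" using sum.reindex[OF inj, of "\<lambda>x. (l x)^2"] by simp
    also have "\<dots> \<le> (\<Sum>x<M. (l x)^2)" using sub by (intro sum_mono2) auto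
    finally show ?thesis unfolding tail_sigma_def by (intro real_sqrt_le_mono)
  qed
  show ?thesis
  proof (cases "j \<in> crit_set \<tau> u M")
    case True
    then have "l j = 0" using lval by simp
    then show ?thesis using t0 unfolding l_def by (simp add: sum_nonneg)
  next
    case False
    have "j \<in> set xs" using setx j by auto
    then obtain p where p: "p < M" "xs ! p = j" using len by (metis in_set_conv_nth)
    have "idx_at u M (p+1) = j" using idx p by simp
    then have pc: "c \<le> p + 1"
    proof -
      { assume "p + 1 < c"
        then have "j \<in> crit_set \<tau> u M" using cs \<open>idx_at u M (p+1) = j\<close> by auto }
      then show ?thesis using False by linarith
    qed
    have "key (xs ! (c - 1)) \<le> key (xs ! p)"
      using sorted_nth_mono[OF srt, of "c - 1" p] pc p len c1 by simp
    then have "\<bar>u j\<bar> \<le> \<bar>u (idx_at u M c)\<bar>" using p idx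
      by (auto simp: key_def less_eq_prod_def)
    also have "\<dots> \<le> \<tau> * tail_sigma u M c" by (rule cu)
    also have "\<dots> \<le> \<tau> * sqrt (\<Sum>j<M. (l j)^2)" using sig t0 by (intro mult_left_mono)
    finally show ?thesis using False lval unfolding l_def by simp
  qed
qed

lemma double_count:
  fixes F :: "nat \<Rightarrow> nat set"
  assumes finV: "finite V" and sub: "\<forall>x<n. F x \<subseteq> V \<and> card (F x) \<le> k"
  shows "(\<Sum>v\<in>V. card {x. x < n \<and> v \<in> F x}) \<le> k * n"
proof -
  have "(\<Sum>v\<in>V. card {x. x < n \<and> v \<in> F x}) = (\<Sum>v\<in>V. \<Sum>x<n. if v \<in> F x then 1 else 0)"
  proof (rule sum.cong[OF refl])
    fix v
    have "card {x. x < n \<and> v \<in> F x} = card {x\<in>{..<n}. v \<in> F x}" by (simp add: lessThan_def)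
    also have "\<dots> = (\<Sum>x\<in>{x\<in>{..<n}. v \<in> F x}. 1)" by simp
    also have "\<dots> = (\<Sum>x<n. if v \<in> F x then 1 else 0)" by (rule sum.inter_filter) simp
    finally show "card {x. x < n \<and> v \<in> F x} = (\<Sum>x<n. if v \<in> F x then 1 else 0)" .
  qed
  also have "\<dots> = (\<Sum>x<n. \<Sum>v\<in>V. if v \<in> F x then 1 else 0)" by (rule sum.swap)
  also have "\<dots> = (\<Sum>x<n. card (F x))"
  proof (rule sum.cong[OF refl])
    fix x assume "x \<in> {..<n}"
    then have s: "F x \<subseteq> V" using sub by auto
    have "(\<Sum>v\<in>V. if v \<in> F x then 1 else 0) = (\<Sum>v\<in>{v\<in>V. v \<in> F x}. 1::nat)"
      by (rule sum.inter_filter[symmetric]) (rule finV)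
    also have "{v\<in>V. v \<in> F x} = F x" using s by auto
    finally show "(\<Sum>v\<in>V. if v \<in> F x then 1 else 0) = card (F x)" by simp
  qed
  also have "\<dots> \<le> (\<Sum>x<n. k)" using sub by (intro sum_mono) auto
  finally show ?thesis by (simp add: mult.commute)
qed

lemma union_count:
  fixes F :: "nat \<Rightarrow> nat set" and Bad :: "nat \<Rightarrow> nat set"
  assumes finV: "finite V" and sub: "\<forall>x<n. F x \<subseteq> V \<and> card (F x) \<le> k"
    and bv: "\<forall>v\<in>V. real (card (Bad v)) \<le> p * real (card {x. x < n \<and> v \<in> F x})"
    and bsub: "\<forall>v\<in>V. Bad v \<subseteq> {..<n}"
    and p0: "p \<ge> 0"
    and BE: "BadE \<subseteq> (\<Union>v\<in>V. Bad v)"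
  shows "real (card BadE) \<le> p * real k * real n"
proof -
  have fin: "finite (\<Union>v\<in>V. Bad v)" using finV bsub by (meson finite_UN_I finite_lessThan finite_subset)
  have "card BadE \<le> card (\<Union>v\<in>V. Bad v)" using BE by (rule card_mono[OF fin])
  also have "\<dots> \<le> (\<Sum>v\<in>V. card (Bad v))" by (rule card_UN_le[OF finV])
  finally have "real (card BadE) \<le> (\<Sum>v\<in>V. real (card (Bad v)))" by (metis of_nat_le_iff of_nat_sum)
  also have "\<dots> \<le> (\<Sum>v\<in>V. p * real (card {x. x < n \<and> v \<in> F x}))" using bv by (intro sum_mono) auto
  also have "\<dots> = p * real (\<Sum>v\<in>V. card {x. x < n \<and> v \<in> F x})" by (simp add: sum_distrib_left)
  also have "\<dots> \<le> p * real (k * n)" using double_count[OF finV sub] p0 by (intro mult_left_mono) (simp only: of_nat_le_iff)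
  finally show ?thesis by simp
qed

lemma vertex_bad:
  fixes E :: "hedge list" and d :: nat and J :: real
  assumes lc: "label_cover k V M N E" and pb: "preimage_bounded M N E d"
    and sm: "smooth V M E J" and J0: "J > 0" and vV: "v \<in> V"
    and t0: "\<tau> \<ge> 0" and e0: "eps > 0" and beta: "8*\<tau>^2 + 8*real d^3*eps \<le> \<beta>"
  shows "real (card {x. x < length E \<and> v \<in> set (fst (E!x)) \<and> \<not> vertex_nice \<beta> \<tau> M N w (E!x) v})
      \<le> (1/(eps^2 * J)) * real (card {x. x < length E \<and> v \<in> set (fst (E!x))})"
proof -
  define l where "l = large_part \<tau> M (w v)"
  define n2 where "n2 = (\<Sum>j<M. (l j)^2)"
  define H where "H = {j. j < M \<and> (l j)^2 > eps * n2}"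
  define deg where "deg = card {x. x < length E \<and> v \<in> set (fst (E!x))}"
  define P where "P = {p \<in> H \<times> H. fst p \<noteq> snd p}"
  define Col where "Col = (\<lambda>p. {x. x < length E \<and> v \<in> set (fst (E!x)) \<and> snd (E!x) v (fst p) = snd (E!x) v (snd p)})"
  define Bad where "Bad = {x. x < length E \<and> v \<in> set (fst (E!x)) \<and> \<not> vertex_nice \<beta> \<tau> M N w (E!x) v}"
  have finH: "finite H" unfolding H_def by auto
  have cardH: "real (card H) * eps \<le> 1"
  proof (cases "H = {}")
    case True then show ?thesis by simp
  next
    case False
    then obtain j where j: "j \<in> H" by auto
    have "(l j)^2 \<le> n2" unfolding n2_def using j H_def
      by (intro member_le_sum) auto
    then have n2p: "n2 > 0" using j e0 unfolding H_def
      by (smt (verit, best) mem_Collect_eq mult_nonneg_nonneg zero_le_power2)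
    have "real (card H) * (eps * n2) \<le> (\<Sum>j\<in>H. (l j)^2)"
      using sum_bounded_below[of H "eps*n2" "\<lambda>j. (l j)^2"] unfolding H_def by auto
    also have "\<dots> \<le> n2" unfolding n2_def H_def by (intro sum_mono2) auto
    finally have "(real (card H) * eps) * n2 \<le> 1 * n2" by (simp add: mult.assoc)
    then show ?thesis using n2p by simp
  qed
  have sub: "Bad \<subseteq> (\<Union>p\<in>P. Col p)"
  proof
    fix x assume xB: "x \<in> Bad"
    show "x \<in> (\<Union>p\<in>P. Col p)"
    proof (rule ccontr)
      assume nx: "x \<notin> (\<Union>p\<in>P. Col p)"
      have xl: "x < length E" and vx: "v \<in> set (fst (E!x))" using xB Bad_def by auto
      have ex: "E!x \<in> set E" using xl by simp
      define \<pi> where "\<pi> = snd (E!x) v"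
      have nc: "\<forall>i<M. \<forall>j<M. (l i)^2 > eps * n2 \<and> (l j)^2 > eps * n2 \<and> i \<noteq> j \<longrightarrow> \<pi> i \<noteq> \<pi> j"
      proof (intro allI impI)
        fix i j assume "i < M" "j < M" "(l i)^2 > eps * n2 \<and> (l j)^2 > eps * n2 \<and> i \<noteq> j"
        then have "(i,j) \<in> P" unfolding P_def H_def by auto
        then have "x \<notin> Col (i,j)" using nx by auto
        then show "\<pi> i \<noteq> \<pi> j" using xl vx unfolding Col_def \<pi>_def by auto
      qed
      have "nice_wrt \<beta> M N \<pi> l"
      proof (rule nice_from_det[where d=d and eps=eps and \<tau>=\<tau>])
        show "\<forall>j<M. \<bar>l j\<bar> \<le> \<tau> * sqrt (\<Sum>j<M. (l j)^2)" using large_bound[OF t0] unfolding l_def by auto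
        show "\<forall>j<M. \<pi> j < N" using lc ex vx unfolding label_cover_def \<pi>_def by auto
        show "\<forall>i<N. card {j. j < M \<and> \<pi> j = i} \<le> d" using pb ex vx unfolding preimage_bounded_def \<pi>_def by auto
        show "\<forall>i<M. \<forall>j<M. (l i)^2 > eps * (\<Sum>j<M. (l j)^2) \<and> (l j)^2 > eps * (\<Sum>j<M. (l j)^2) \<and> i \<noteq> j \<longrightarrow> \<pi> i \<noteq> \<pi> j"
          using nc unfolding n2_def .
      qed (use t0 e0 beta in auto)
      then have "vertex_nice \<beta> \<tau> M N w (E!x) v" unfolding vertex_nice_def l_def \<pi>_def .
      then show False using xB Bad_def by auto
    qed
  qed
  have finP: "finite P" unfolding P_def using finH by auto
  have "card Bad \<le> card (\<Union>p\<in>P. Col p)"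
  proof (rule card_mono[OF _ sub])
    show "finite (\<Union>p\<in>P. Col p)" using finP by (auto simp: Col_def)
  qed
  also have "\<dots> \<le> (\<Sum>p\<in>P. card (Col p))" by (rule card_UN_le[OF finP])
  finally have "real (card Bad) \<le> (\<Sum>p\<in>P. real (card (Col p)))" by (metis of_nat_le_iff of_nat_sum)
  also have "\<dots> \<le> real (card P) * (real deg / J)"
  proof (rule sum_bounded_above)
    fix p assume "p \<in> P"
    then have "fst p < M" "snd p < M" "fst p \<noteq> snd p" unfolding P_def H_def by auto
    then show "real (card (Col p)) \<le> real deg / J"
      using sm vV unfolding smooth_def Col_def deg_def by auto
  qed
  also have "\<dots> \<le> real (card H)^2 * (real deg / J)"
  proof (rule mult_right_mono)
    have "card P \<le> card (H \<times> H)" unfolding P_def by (rule card_mono) (use finH in auto)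
    then have "card P \<le> card H * card H" by (simp add: card_cartesian_product)
    then show "real (card P) \<le> real (card H)^2" by (metis of_nat_le_iff of_nat_mult power2_eq_square)
  qed (use J0 in auto)
  also have "\<dots> \<le> (1/eps)^2 * (real deg / J)"
  proof (rule mult_right_mono)
    have "real (card H) \<le> 1/eps" using cardH e0 by (simp add: field_simps)
    then show "real (card H)^2 \<le> (1/eps)^2" by (intro power_mono) auto
  qed (use J0 in auto)
  also have "\<dots> = (1/(eps^2 * J)) * real deg" by (simp add: field_simps power2_eq_square)
  finally show ?thesis unfolding Bad_def deg_def .
qed

lemma lin_exp: "2*k+1 \<le> (2::nat)^(k+1)"
proof (induction k)
  case (Suc k)
  have "1 \<le> (2::nat)^k" by simp
  then show ?case using Suc.IH by (simp; linarith)
qed simp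

lemma sq_exp: "k^2 \<le> (2::nat)^(k+1)"
proof (induction k)
  case 0 then show ?case by simp
next
  case (Suc k)
  have "(Suc k)^2 = k^2 + (2*k+1)" by (simp add: power2_eq_square)
  also have "\<dots> \<le> 2^(k+1) + 2^(k+1)" using Suc lin_exp[of k] by linarith
  finally show ?case by simp
qed

lemma arith_nat: "64 * 4^(6*k) * k^28 \<le> (2::nat)^20 * 4^(17*k)"
proof -
  have "k^28 = (k^2)^14" by (simp add: power_mult[symmetric])
  also have "\<dots> \<le> (2^(k+1))^14" by (intro power_mono sq_exp) auto
  also have "\<dots> = (2::nat)^(14*k+14)" unfolding power_mult[symmetric] by (rule arg_cong[where f="(^) 2"]) simp
  finally have a: "k^28 \<le> (2::nat)^(14*k+14)" .
  have "64 * 4^(6*k) * k^28 \<le> 64 * 4^(6*k) * 2^(14*k+14)" using a by simp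
  also have "\<dots> = (2::nat)^(26*k+20)"
  proof -
    have f4: "\<And>m. (4::nat)^m = 2^(2*m)" by (simp add: power_mult)
    have "64 * 4^(6*k) * 2^(14*k+14) = (2::nat)^6 * 2^(2*(6*k)) * 2^(14*k+14)" by (simp add: f4)
    also have "\<dots> = 2^(6 + 2*(6*k) + (14*k+14))" by (simp only: power_add)
    also have "6 + 2*(6*k) + (14*k+14) = 26*k+20" by simp
    finally show ?thesis .
  qed
  also have "\<dots> \<le> 2^(34*k+20)" by (intro power_increasing) auto
  also have "\<dots> = (2::nat)^20 * 4^(17*k)"
  proof -
    have f4: "\<And>m. (4::nat)^m = 2^(2*m)" by (simp add: power_mult)
    have "(2::nat)^20 * 4^(17*k) = 2^20 * 2^(2*(17*k))" by (simp add: f4)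
    also have "\<dots> = 2^(20 + 2*(17*k))" by (simp only: power_add)
    also have "20 + 2*(17*k) = 34*k+20" by simp
    finally show ?thesis by simp
  qed
  finally show ?thesis .
qed

theorem lemma5p5:
  shows "\<exists>C::real. \<forall>(k::nat) (V::nat set) (M::nat) (N::nat) (E::hedge list)
            (w::nat \<Rightarrow> nat \<Rightarrow> real).
     k \<ge> 1 \<and> label_cover k V M N E \<and> preimage_bounded M N E (4 ^ k)
       \<and> smooth V M E (4 ^ (17 * k)) \<longrightarrow>
     (let \<tau> = 1 / real k ^ 13 in
        real (card {x. x < length E \<and> edge_nice (2 * \<tau>) \<tau> M N w (E ! x)})
          \<ge> (1 - C / real k) * real (length E))"
proof (intro exI allI impI)
  define C :: real where "C = 2^20"
  fix k V M N E w
  assume asm: "k \<ge> (1::nat) \<and> label_cover k V M N E \<and> preimage_bounded M N E (4 ^ k)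
       \<and> smooth V M E (4 ^ (17 * k))"
  then have k1: "k \<ge> 1" and lc: "label_cover k V M N E" and pb: "preimage_bounded M N E (4^k)"
    and sm: "smooth V M E (4 ^ (17 * k))" by auto
  define \<tau> :: real where "\<tau> = 1 / real k ^ 13"
  define n where "n = length E"
  define Good where "Good = {x. x < n \<and> edge_nice (2 * \<tau>) \<tau> M N w (E ! x)}"
  define BadE where "BadE = {x. x < n \<and> \<not> edge_nice (2 * \<tau>) \<tau> M N w (E ! x)}"
  have main: "real (card Good) \<ge> (1 - C / real k) * real n"
  proof (cases "C / real k \<ge> 1")
    case True
    then have "(1 - C / real k) * real n \<le> 0" by (intro mult_nonpos_nonneg) auto
    then show ?thesis by simp
  next
    case False
    then have kC: "real k > C" using k1 by (simp add: field_simps)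
    then have k2: "real k \<ge> 2" unfolding C_def by simp
    have t0: "\<tau> > 0" unfolding \<tau>_def using k1 by simp
    have "real k ^ 13 \<ge> 2 ^ 13" using k2 by (intro power_mono) auto
    then have t8: "8 * \<tau> \<le> 1" unfolding \<tau>_def by (simp add: divide_le_eq)
    define d :: nat where "d = 4^k"
    define J :: real where "J = 4 ^ (17 * k)"
    define eps where "eps = \<tau> / (8 * real d^3)"
    have d0: "real d > 0" unfolding d_def by simp
    have e0: "eps > 0" unfolding eps_def using t0 d0 by simp
    have J0: "J > 0" unfolding J_def by simp
    have beta: "8*\<tau>^2 + 8*real d^3*eps \<le> 2*\<tau>"
    proof -
      have "8*real d^3*eps = \<tau>" unfolding eps_def using d0 by simp
      moreover have "8*\<tau>^2 \<le> \<tau>" using t8 t0 by (simp add: power2_eq_square mult_le_cancel_right1)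
      ultimately show ?thesis by linarith
    qed
    define p where "p = 1 / (eps^2 * J)"
    have p0: "p \<ge> 0" unfolding p_def using e0 J0 by simp
    define Bad where "Bad = (\<lambda>v. {x. x < length E \<and> v \<in> set (fst (E!x)) \<and> \<not> vertex_nice (2*\<tau>) \<tau> M N w (E!x) v})"
    have bv: "\<forall>v\<in>V. real (card (Bad v)) \<le> p * real (card {x. x < n \<and> v \<in> set (fst (E!x))})"
    proof
      fix v assume "v \<in> V"
      show "real (card (Bad v)) \<le> p * real (card {x. x < n \<and> v \<in> set (fst (E!x))})"
        unfolding Bad_def p_def n_def
        by (rule vertex_bad[OF lc pb[folded d_def] sm[folded J_def] J0 \<open>v \<in> V\<close> _ e0 beta]) (use t0 in auto)
    qed
    have fs: "\<forall>x<n. set (fst (E!x)) \<subseteq> V \<and> card (set (fst (E!x))) \<le> k"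
    proof (intro allI impI)
      fix x assume "x < n"
      then have "E!x \<in> set E" unfolding n_def by simp
      then show "set (fst (E!x)) \<subseteq> V \<and> card (set (fst (E!x))) \<le> k"
        using lc unfolding label_cover_def by (auto simp: distinct_card)
    qed
    have finV: "finite V" using lc unfolding label_cover_def by simp
    have BE: "BadE \<subseteq> (\<Union>v\<in>V. Bad v)"
    proof
      fix x assume "x \<in> BadE"
      then have x: "x < n" and ne: "\<not> edge_nice (2 * \<tau>) \<tau> M N w (E ! x)" unfolding BadE_def by auto
      then obtain v where v: "v \<in> set (fst (E!x))" "\<not> vertex_nice (2*\<tau>) \<tau> M N w (E!x) v"
        unfolding edge_nice_def by auto
      then have "v \<in> V" using fs x by auto
      then show "x \<in> (\<Union>v\<in>V. Bad v)" using v x unfolding Bad_def n_def by auto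
    qed
    have cB: "real (card BadE) \<le> p * real k * real n"
      by (rule union_count[OF finV fs bv _ p0 BE]) (auto simp: Bad_def n_def)
    have split: "card Good + card BadE = n"
    proof -
      have "Good \<union> BadE = {..<n}" "Good \<inter> BadE = {}" unfolding Good_def BadE_def by auto
      moreover have "finite Good" "finite BadE" unfolding Good_def BadE_def by auto
      ultimately show ?thesis by (metis card_Un_disjoint card_lessThan)
    qed
    have pk: "p * real k \<le> C / real k"
    proof -
      have kp: "real k > 0" using k1 by simp
      have "eps^2 * J = J / (64 * real d^6 * real k^26)"
        unfolding eps_def \<tau>_def by (simp add: field_simps power2_eq_square flip: power_add)
      then have pe: "p = 64 * real d^6 * real k^26 / J" unfolding p_def by simp
      have "real (64 * 4^(6*k) * k^28) \<le> real ((2::nat)^20 * 4^(17*k))"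
        using arith_nat[of k] by (simp only: of_nat_le_iff)
      then have ineq: "64 * 4^(6*k) * real k^28 \<le> 2^20 * 4^(17*k)" by simp
      have "real d^6 = 4^(6*k)" unfolding d_def by (simp add: power_mult[symmetric] mult.commute)
      moreover have "real k * (real k * real k ^ 26) = real k ^ 28"
        by (simp add: power_Suc[symmetric] del: power_Suc)
      ultimately have "p * real k * real k = 64 * 4^(6*k) * real k^28 / J"
        unfolding pe by (simp add: field_simps)
      also have "\<dots> \<le> 2^20 * 4^(17*k) / J" using ineq J0 by (simp add: divide_right_mono)
      also have "\<dots> = C" unfolding J_def C_def by simp
      finally show ?thesis using kp by (simp add: field_simps)
    qed
    have "real (card Good) = real n - real (card BadE)" using split by (simp add: algebra_simps flip: of_nat_add)
    also have "\<dots> \<ge> real n - p * real k * real n" using cB by simp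
    moreover have "p * real k * real n \<le> C / real k * real n" using pk by (intro mult_right_mono) auto
    ultimately show ?thesis by (simp add: algebra_simps)
  qed
  then show "let \<tau> = 1 / real k ^ 13 in
        real (card {x. x < length E \<and> edge_nice (2 * \<tau>) \<tau> M N w (E ! x)})
          \<ge> (1 - C / real k) * real (length E)"
    unfolding Good_def n_def \<tau>_def Let_def .
qed

end
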